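(* Let $\rho_{\mathrm W}=\frac{1-\eta}{4}\mathbb{1}\otimes\mathbb{1}+\eta|\psi^-\rangle\langle\psi^-|$ be the two-qubit Werner state, where $|\psi^-\rangle=\frac{1}{\sqrt2}(|01\rangle-|10\rangle)$ and $\eta\in[0,1]$. Suppose the assemblage generated on Bob's side by all of Alice's projective measurements of observables $\cos\theta\,\sigma_x+\sin\theta\,\sigma_y$, $\theta\in[0,\pi)$, admits a local hidden state model. Then $\eta\le 2/\pi$.
   Context: A local hidden state model for an assemblage $\{\sigma_{i|X}\}$ means that there exist: - a probability distribution $\{\kappa_\lambda\}$, - response distributions $p^{(\lambda)}_i(x)$, - qubit density matrices $\rho^{(\lambda)}$, such that $\sigma_{i|X}=\sum_\lambda\kappa_\lambda p^{(\lambda)}_i(x)\rho^{(\lambda)}$ for every measurement $X$ in the given set and every outcome $i$. The assemblage is defined by $\sigma_{i|X}=\mathrm{Tr}_A[(\Pi^X_i\otimes\mathbb{1})\rho_{\mathrm W}]$, where $\Pi^X_i$ are the eigenprojectors of the observable $X$. *)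

theory Defs
  imports "HOL-Probability.Probability"
begin

text \<open>Qubit: computational basis indexed by bool (False = |0>, True = |1>).
  Two qubits (A,B): index type bool \<times> bool, first component = Alice.\<close>

type_synonym qmat = "complex^bool^bool"
type_synonym qqmat = "complex^(bool\<times>bool)^(bool\<times>bool)"

definition adjoint :: "complex^'n^'n \<Rightarrow> complex^'n^'n" where
  "adjoint M = (\<chi> i j. cnj (M $ j $ i))"

definition hermitian :: "complex^'n^'n \<Rightarrow> bool" where
  "hermitian M \<longleftrightarrow> adjoint M = M"

definition mtrace :: "complex^'n^'n \<Rightarrow> complex" where
  "mtrace M = (\<Sum>i\<in>UNIV. M $ i $ i)"

definition psd :: "complex^'n^'n \<Rightarrow> bool" where
  "psd M \<longleftrightarrow> hermitian M \<and>
     (\<forall>v::complex^'n. 0 \<le> Re (\<Sum>i\<in>UNIV. \<Sum>j\<in>UNIV. cnj (v $ i) * M $ i $ j * v $ j))"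

definition density_matrix :: "complex^'n^'n \<Rightarrow> bool" where
  "density_matrix M \<longleftrightarrow> psd M \<and> mtrace M = 1"

definition is_eigenprojector :: "complex^'n^'n \<Rightarrow> real \<Rightarrow> complex^'n^'n \<Rightarrow> bool" where
  "is_eigenprojector X e P \<longleftrightarrow> hermitian P \<and> P ** P = P \<and>
     range (\<lambda>v. P *v v) = {v. X *v v = complex_of_real e *s v}"

definition pauli_x :: qmat where
  "pauli_x = (\<chi> i j. if i \<noteq> j then 1 else 0)"

definition pauli_y :: qmat where
  "pauli_y = (\<chi> i j. if i = j then 0 else if j then - \<i> else \<i>)"

definition obs :: "real \<Rightarrow> qmat" where
  "obs \<theta> = (\<chi> i j. complex_of_real (cos \<theta>) * pauli_x $ i $ j
                   + complex_of_real (sin \<theta>) * pauli_y $ i $ j)"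

definition psi_minus :: "complex^(bool\<times>bool)" where
  "psi_minus = (\<chi> x. if fst x = snd x then 0
                else if snd x then complex_of_real (1 / sqrt 2) else - complex_of_real (1 / sqrt 2))"

definition werner :: "real \<Rightarrow> qqmat" where
  "werner \<eta> = (\<chi> x y. complex_of_real ((1 - \<eta>) / 4) * (if x = y then 1 else 0)
                 + complex_of_real \<eta> * (psi_minus $ x * cnj (psi_minus $ y)))"

definition tensor :: "qmat \<Rightarrow> qmat \<Rightarrow> qqmat" where
  "tensor A B = (\<chi> x y. A $ fst x $ fst y * B $ snd x $ snd y)"

definition ptrace_A :: "qqmat \<Rightarrow> qmat" where
  "ptrace_A M = (\<chi> b b'. \<Sum>a\<in>UNIV. M $ (a,b) $ (a,b'))"

definition assemblage :: "real \<Rightarrow> qmat \<Rightarrow> qmat" where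
  "assemblage \<eta> P = ptrace_A (tensor P (mat 1) ** werner \<eta>)"

end

theory Submission
  imports Defs "HOL-Real_Asymp.Real_Asymp"
begin


lemma F_bound:
  fixes x y u :: real assumes "x^2 + y^2 \<le> 1"
  shows "x * sin u - y * cos u \<le> 1"
proof -
  have "(x * sin u - y * cos u)^2 + (x * cos u + y * sin u)^2 = x^2+y^2"
    using sin_cos_squared_add[of u] by algebra
  then have "(x * sin u - y * cos u)^2 \<le> 1" using assms
    by (smt (verit) sin_cos_squared_add zero_le_power2)
  then have "\<bar>x * sin u - y * cos u\<bar> \<le> 1" by (simp add: abs_square_le_1)
  then show ?thesis by linarith
qed

lemma sum_abs_bound_pos:
  fixes x y :: real and N :: nat
  assumes xy: "x^2 + y^2 \<le> 1" and N: "N > 0" and x0: "x \<ge> 0"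
  shows "(\<Sum>j<N. \<bar>x * cos (real j * (pi / N)) + y * sin (real j * (pi / N))\<bar>) \<le> 1 / sin (pi / N / 2)"
proof -
  define \<delta> where "\<delta> = pi / N"
  define f where "f j = x * cos (real j * \<delta>) + y * sin (real j * \<delta>)" for j :: nat
  define G where "G j = x * sin (real j * \<delta> - \<delta>/2) - y * cos (real j * \<delta> - \<delta>/2)" for j :: nat
  have dpos: "\<delta> > 0" using N by (simp add: \<delta>_def)
  have Nd: "real N * \<delta> = pi" using N by (simp add: \<delta>_def)
  have spos: "sin (\<delta>/2) > 0"
  proof (rule sin_gt_zero)
    show "0 < \<delta>/2" using dpos by simp
    have "real N \<ge> 1" using N by simp
    then have "pi / N \<le> pi / 1" by (intro divide_left_mono) auto
    then have "\<delta> \<le> pi" by (simp add: \<delta>_def)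
    then show "\<delta>/2 < pi" using pi_gt_zero by linarith
  qed
  have key: "2 * sin (\<delta>/2) * f j = G (Suc j) - G j" for j
  proof -
    have "G (Suc j) = x * sin (real j * \<delta> + \<delta>/2) - y * cos (real j * \<delta> + \<delta>/2)"
      by (simp add: G_def algebra_simps)
    moreover have "G j = x * sin (real j * \<delta> - \<delta>/2) - y * cos (real j * \<delta> - \<delta>/2)"
      by (simp add: G_def)
    ultimately show ?thesis
      by (simp add: f_def sin_add sin_diff cos_add cos_diff algebra_simps)
  qed
  have G0N: "G 0 + G N = 0"
  proof -
    have "real N * \<delta> - \<delta>/2 = pi - \<delta>/2" using Nd by simp
    then show ?thesis by (simp add: G_def sin_diff cos_diff)
  qed
  have lt: "real j * \<delta> < pi" if "j < N" for j
  proof -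
    have "real j * \<delta> < real N * \<delta>" using that dpos by (intro mult_strict_right_mono) auto
    then show ?thesis using Nd by simp
  qed
  have claim: "f k < 0" if "j < k" "k < N" "f j < 0" for j k
  proof -
    have "j \<noteq> 0"
    proof
      assume "j = 0" then show False using that x0 by (simp add: f_def)
    qed
    have tj: "0 < real j * \<delta>" "real j * \<delta> < pi"
      using \<open>j \<noteq> 0\<close> dpos that lt[of j] by auto
    have tk: "real k * \<delta> < pi" using that lt by auto
    have tjk: "0 < real k * \<delta> - real j * \<delta>" "real k * \<delta> - real j * \<delta> < pi"
    proof -
      have "real j * \<delta> < real k * \<delta>" using that dpos by (intro mult_strict_right_mono) auto
      then show "0 < real k * \<delta> - real j * \<delta>" "real k * \<delta> - real j * \<delta> < pi"
        using tj tk by linarith+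
    qed
    have id: "f j * sin (real k * \<delta>) - f k * sin (real j * \<delta>) = x * sin (real k * \<delta> - real j * \<delta>)"
      by (simp add: f_def sin_diff algebra_simps)
    have "sin (real k * \<delta>) > 0" using tk dpos \<open>j<k\<close> by (intro sin_gt_zero) auto
    moreover have "sin (real j * \<delta>) > 0" using tj by (intro sin_gt_zero) auto
    moreover have "x * sin (real k * \<delta> - real j * \<delta>) \<ge> 0" using x0 tjk
      by (simp add: sin_ge_zero less_imp_le)
    ultimately have "f k * sin (real j * \<delta>) < 0" "sin (real j * \<delta>) > 0"
      using id that(3) mult_neg_pos[of "f j" "sin (real k * \<delta>)"] by linarith+
    then show ?thesis by (simp add: mult_less_0_iff)
  qed
  define m where "m = (if \<exists>j<N. f j < 0 then (LEAST j. j < N \<and> f j < 0) else N)"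
  have mN: "m \<le> N"
  proof (cases "\<exists>j<N. f j < 0")
    case True
    then obtain j where j: "j < N" "f j < 0" by auto
    then have "(LEAST j. j < N \<and> f j < 0) \<le> j" by (intro Least_le) auto
    then show ?thesis using True j by (simp add: m_def)
  qed (auto simp add: m_def)
  have lo: "f j \<ge> 0" if "j < m" for j
  proof (rule ccontr)
    assume "\<not> f j \<ge> 0"
    then have "j < N \<and> f j < 0" using that mN by auto
    then show False using that unfolding m_def
      by (auto dest: not_less_Least split: if_splits)
  qed
  have hi: "f j \<le> 0" if "m \<le> j" "j < N" for j
  proof -
    have ex: "\<exists>j<N. f j < 0" using that mN m_def by (auto split: if_splits)
    then have fm: "m < N \<and> f m < 0" unfolding m_def using LeastI_ex[of "\<lambda>j. j < N \<and> f j < 0"] by auto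
    show ?thesis
    proof (cases "j = m")
      case True then show ?thesis using fm by simp
    next
      case False then show ?thesis using claim[of m j] fm that by auto
    qed
  qed
  have split: "{..<N} = {..<m} \<union> {m..<N}" using mN by auto
  have "(\<Sum>j<N. \<bar>f j\<bar>) = (\<Sum>j<m. f j) - (\<Sum>j=m..<N. f j)"
    apply (subst split, subst sum.union_disjoint)
    using lo hi by (auto simp: sum_negf[symmetric] intro!: sum.cong)
  then have "2 * sin (\<delta>/2) * (\<Sum>j<N. \<bar>f j\<bar>) = (\<Sum>j<m. G (Suc j) - G j) - (\<Sum>j=m..<N. G (Suc j) - G j)"
    by (simp add: right_diff_distrib sum_distrib_left key)
  also have "\<dots> = 2 * G m - (G 0 + G N)"
    using mN by (simp add: sum_lessThan_telescope sum_Suc_diff')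
  also have "\<dots> \<le> 2"
  proof -
    have "G m \<le> 1" unfolding G_def by (rule F_bound[OF xy])
    then show ?thesis using G0N by linarith
  qed
  finally have "sin (\<delta>/2) * (\<Sum>j<N. \<bar>f j\<bar>) \<le> 1" by simp
  then show ?thesis using spos by (simp add: f_def \<delta>_def field_simps)
qed

lemma sum_abs_bound:
  fixes x y :: real and N :: nat
  assumes xy: "x^2 + y^2 \<le> 1" and N: "N > 0"
  shows "(\<Sum>j<N. \<bar>x * cos (real j * (pi / N)) + y * sin (real j * (pi / N))\<bar>) \<le> 1 / sin (pi / N / 2)"
proof (cases "x \<ge> 0")
  case True then show ?thesis using sum_abs_bound_pos[OF xy N] by simp
next
  case False
  have xy': "(-x)^2 + (-y)^2 \<le> 1" using xy by simp
  have e: "\<bar>(-x) * cos a + (-y) * sin a\<bar> = \<bar>x * cos a + y * sin a\<bar>" for a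
    by (metis abs_minus_cancel minus_add_distrib mult_minus_left)
  from sum_abs_bound_pos[OF xy' N] False show ?thesis
    by (simp only: e)
qed

lemma lim_bound: "(\<lambda>N. 1 / (real N * sin (pi / real N / 2))) \<longlonglongrightarrow> 2 / pi"
  by real_asymp

lemma adjoint_mult: "adjoint (A ** B) = adjoint B ** adjoint (A :: complex^'n^'n)"
  by (simp add: adjoint_def matrix_matrix_mult_def vec_eq_iff mult.commute)

lemma proj_eq:
  fixes X P Q :: "complex^'n^'n"
  assumes P: "is_eigenprojector X e P" and hQ: "hermitian Q"
    and a: "\<And>v. X *v (Q *v v) = complex_of_real e *s (Q *v v)"
    and b: "\<And>v. X *v v = complex_of_real e *s v \<Longrightarrow> Q *v v = v"
  shows "P = Q"
proof -
  have hP: "hermitian P" and PP: "P ** P = P" and R: "range (\<lambda>v. P *v v) = {v. X *v v = complex_of_real e *s v}"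
    using P by (auto simp: is_eigenprojector_def)
  have PQ: "P ** Q = Q"
  proof (subst matrix_eq, intro allI)
    fix v
    have "Q *v v \<in> range (\<lambda>v. P *v v)" using R a by auto
    then obtain w where w: "Q *v v = P *v w" by auto
    have "(P ** Q) *v v = P *v (P *v w)" by (simp add: matrix_vector_mul_assoc[symmetric] w)
    also have "\<dots> = P *v w" by (simp add: matrix_vector_mul_assoc PP)
    finally show "(P ** Q) *v v = Q *v v" using w by simp
  qed
  have QP: "Q ** P = P"
  proof (subst matrix_eq, intro allI)
    fix v
    have "P *v v \<in> range (\<lambda>v. P *v v)" by auto
    then have "X *v (P *v v) = complex_of_real e *s (P *v v)" using R by auto
    then have "Q *v (P *v v) = P *v v" by (rule b)
    then show "(Q ** P) *v v = P *v v" by (simp add: matrix_vector_mul_assoc[symmetric])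
  qed
  have "P = adjoint P" using hP by (simp add: hermitian_def)
  also have "\<dots> = adjoint (Q ** P)" using QP by simp
  also have "\<dots> = adjoint P ** adjoint Q" by (rule adjoint_mult)
  also have "\<dots> = P ** Q" using hP hQ by (simp add: hermitian_def)
  finally show ?thesis using PQ by simp
qed


lemma cc: "complex_of_real (cos t) * complex_of_real (cos t) = 1 - complex_of_real (sin t) * complex_of_real (sin t)"
proof -
  have "cos t * cos t = 1 - sin t * sin t" using sin_cos_squared_add[of t] by (simp add: power2_eq_square)
  then have "complex_of_real (cos t * cos t) = complex_of_real (1 - sin t * sin t)" by simp
  then show ?thesis by simp
qed

lemma s2: "complex_of_real (sqrt 2) * complex_of_real (sqrt 2) = 2"
proof -
  have "complex_of_real (sqrt 2) * complex_of_real (sqrt 2) = complex_of_real (sqrt 2 * sqrt 2)"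
    by (rule of_real_mult[symmetric])
  also have "\<dots> = 2" by simp
  finally show ?thesis .
qed

lemma UNIV_bb: "(UNIV::(bool\<times>bool) set) = {(False,False),(False,True),(True,False),(True,True)}"
  by (auto simp: UNIV_bool)

lemma obs_entries:
  "obs t $ False $ False = 0" "obs t $ True $ True = 0"
  "obs t $ False $ True = complex_of_real (cos t) - \<i> * complex_of_real (sin t)"
  "obs t $ True $ False = complex_of_real (cos t) + \<i> * complex_of_real (sin t)"
  by (simp_all add: obs_def pauli_x_def pauli_y_def)

lemma assemblage_FT: "assemblage \<eta> P $ False $ True = - complex_of_real \<eta> / 2 * P $ False $ True"
  apply (simp add: assemblage_def ptrace_A_def tensor_def matrix_matrix_mult_def werner_def psi_minus_def UNIV_bool UNIV_bb mat_def s2)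
  done

definition Qm :: "real \<Rightarrow> real \<Rightarrow> qmat" where
  "Qm t e = (\<chi> i j. ((if i = j then 1 else 0) + complex_of_real e * obs t $ i $ j) / 2)"

lemma Qm_herm: "hermitian (Qm t e)"
  by (simp add: hermitian_def adjoint_def Qm_def vec_eq_iff obs_entries UNIV_bool all_bool_eq)

lemma Qm_a: assumes "e \<in> {1, -1}"
  shows "obs t *v (Qm t e *v v) = complex_of_real e *s (Qm t e *v v)"
  using assms apply (auto simp add: Qm_def vec_eq_iff obs_entries UNIV_bool all_bool_eq matrix_vector_mult_def algebra_simps cc)
  apply (simp_all add: divide_simps)
  done

lemma Qm_b: assumes "e \<in> {1, -1}" "obs t *v v = complex_of_real e *s v"
  shows "Qm t e *v v = v"
  using assms apply (auto simp add: Qm_def vec_eq_iff obs_entries UNIV_bool all_bool_eq matrix_vector_mult_def algebra_simps cc)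
  done



lemma dens_bound:
  assumes "density_matrix (r :: qmat)"
  shows "(Re (r $ False $ True))^2 + (Im (r $ False $ True))^2 \<le> 1/4"
proof -
  have h: "hermitian r" and ps: "\<And>v. 0 \<le> Re (\<Sum>i\<in>UNIV. \<Sum>j\<in>UNIV. cnj (v $ i) * r $ i $ j * v $ j)"
    and tr: "mtrace r = 1"
    using assms by (auto simp: density_matrix_def psd_def)
  define z where "z = r $ False $ True"
  define a where "a = Re (r $ False $ False)"
  define d where "d = Re (r $ True $ True)"
  have hr: "cnj (r $ j $ i) = r $ i $ j" for i j
  proof -
    have "adjoint r $ i $ j = r $ i $ j" using h by (simp add: hermitian_def)
    then show ?thesis by (simp add: adjoint_def)
  qed
  have hTF: "r $ True $ False = cnj z" using hr[of False True] unfolding z_def by (metis complex_cnj_cnj)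
  have hFF: "Im (r $ False $ False) = 0" using hr[of False False] by (simp add: complex_eq_iff)
  have hTT: "Im (r $ True $ True) = 0" using hr[of True True] by (simp add: complex_eq_iff)
  have ad: "a + d = 1" using tr by (simp add: mtrace_def UNIV_bool a_def d_def complex_eq_iff)
  have d0: "d \<ge> 0" using ps[of "\<chi> i. if i then 1 else 0"] by (simp add: UNIV_bool d_def)
  have q: "a * (Re z ^ 2 + Im z ^ 2) - 2 * t * (Re z ^ 2 + Im z ^ 2) + t^2 * d \<ge> 0" for t :: real
  proof -
    have "0 \<le> Re (\<Sum>i\<in>UNIV. \<Sum>j\<in>UNIV. cnj ((\<chi> i. if i then - complex_of_real t else z) $ i) * r $ i $ j * (\<chi> i. if i then - complex_of_real t else z) $ j)"
      by (rule ps)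
    then show ?thesis
      by (simp add: UNIV_bool hTF a_def d_def hFF hTT z_def[symmetric] power2_eq_square algebra_simps)
  qed
  have a1: "a = 1 - d" using ad by simp
  have q1: "d * (1/4 - (Re z ^ 2 + Im z ^ 2)) \<ge> 0"
  proof -
    have "(1 - d) * (Re z ^ 2 + Im z ^ 2) - 2 * (1/2) * (Re z ^ 2 + Im z ^ 2) + (1/2)^2 * d \<ge> 0"
      using q[of "1/2"] unfolding a1 .
    moreover have "(1 - d) * (Re z ^ 2 + Im z ^ 2) - 2 * (1/2) * (Re z ^ 2 + Im z ^ 2) + (1/2)^2 * d
       = d * (1/4 - (Re z ^ 2 + Im z ^ 2))" by (simp add: algebra_simps power2_eq_square)
    ultimately show ?thesis by simp
  qed
  have q2: "d - (1 + d) * (Re z ^ 2 + Im z ^ 2) \<ge> 0"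
  proof -
    have "(1 - d) * (Re z ^ 2 + Im z ^ 2) - 2 * 1 * (Re z ^ 2 + Im z ^ 2) + 1^2 * d \<ge> 0"
      using q[of 1] unfolding a1 .
    moreover have "(1 - d) * (Re z ^ 2 + Im z ^ 2) - 2 * 1 * (Re z ^ 2 + Im z ^ 2) + 1^2 * d
       = d - (1 + d) * (Re z ^ 2 + Im z ^ 2)" by (simp add: algebra_simps power2_eq_square)
    ultimately show ?thesis by simp
  qed
  have "Re z ^ 2 + Im z ^ 2 \<le> 1/4"
  proof (cases "d = 0")
    case True then have "Re z ^ 2 + Im z ^ 2 \<le> 0" using q2 by simp
    then show ?thesis by linarith
  next
    case False then have "d > 0" using d0 by simp
    with q1 have "1/4 - (Re z ^ 2 + Im z ^ 2) \<ge> 0" by (simp add: zero_le_mult_iff)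
    then show ?thesis by linarith
  qed
  then show ?thesis unfolding z_def .
qed



lemma pmf_int_bounded:
  fixes f :: "'l \<Rightarrow> 'b::{banach, second_countable_topology}"
  assumes "\<And>l. norm (f l) \<le> B"
  shows "integrable (measure_pmf \<kappa>) f"
  by (rule measure_pmf.integrable_const_bound[where B=B]) (auto simp: assms)

lemma sin_pos_N: "N > 0 \<Longrightarrow> sin (pi / real N / 2) > 0"
proof (rule sin_gt_zero)
  assume N: "N > 0"
  then show "0 < pi / real N / 2" by simp
  have "real N \<ge> 1" using N by simp
  then have "pi / N \<le> pi / 1" by (intro divide_left_mono) auto
  then have "pi / N \<le> pi" by simp
  then show "pi / real N / 2 < pi" using pi_gt_zero by (simp add: divide_less_eq)
qed

theorem mainTheorem7:
  fixes \<eta> :: real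
    and Pi :: "real \<Rightarrow> real \<Rightarrow> qmat"
  assumes "0 \<le> \<eta>" and "\<eta> \<le> 1"
    and "\<And>\<theta> i. \<theta> \<in> {0..<pi} \<Longrightarrow> i \<in> {1, -1} \<Longrightarrow> is_eigenprojector (obs \<theta>) i (Pi \<theta> i)"
    and "\<exists>(\<kappa> :: 'l pmf) (p :: 'l \<Rightarrow> real \<Rightarrow> real \<Rightarrow> real) (\<rho> :: 'l \<Rightarrow> qmat).
           (\<forall>l \<theta> i. 0 \<le> p l \<theta> i) \<and>
           (\<forall>l. \<forall>\<theta>\<in>{0..<pi}. p l \<theta> 1 + p l \<theta> (-1) = 1) \<and>
           (\<forall>l. density_matrix (\<rho> l)) \<and>
           (\<forall>\<theta>\<in>{0..<pi}. \<forall>i\<in>{1, -1}.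
              assemblage \<eta> (Pi \<theta> i) =
                (\<chi> r c. measure_pmf.expectation \<kappa>
                          (\<lambda>l. complex_of_real (p l \<theta> i) * \<rho> l $ r $ c)))"
  shows "\<eta> \<le> 2 / pi"
proof -
  obtain \<kappa> :: "'l pmf" and p :: "'l \<Rightarrow> real \<Rightarrow> real \<Rightarrow> real" and \<rho> :: "'l \<Rightarrow> qmat"
    where p0: "\<And>l \<theta> i. 0 \<le> p l \<theta> i"
      and p1: "\<And>l \<theta>. \<theta> \<in> {0..<pi} \<Longrightarrow> p l \<theta> 1 + p l \<theta> (-1) = 1"
      and dm: "\<And>l. density_matrix (\<rho> l)"
      and as: "\<And>\<theta> i. \<theta> \<in> {0..<pi} \<Longrightarrow> i \<in> {1, -1} \<Longrightarrow> assemblage \<eta> (Pi \<theta> i) =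
                (\<chi> r c. measure_pmf.expectation \<kappa>
                          (\<lambda>l. complex_of_real (p l \<theta> i) * \<rho> l $ r $ c))"
    using assms(4) by blast
  define z where "z l = \<rho> l $ False $ True" for l
  define u where "u l = 2 * Re (z l)" for l
  define w where "w l = - 2 * Im (z l)" for l
  have zq: "(Re (z l))^2 + (Im (z l))^2 \<le> 1/4" for l
    unfolding z_def by (rule dens_bound[OF dm])
  have uw: "(u l)^2 + (w l)^2 \<le> 1" for l
    using zq[of l] by (simp add: u_def w_def power_mult_distrib)
  have zn: "norm (z l) \<le> 1" for l
  proof -
    have "(norm (z l))^2 \<le> 1" using zq[of l] by (simp add: cmod_power2)
    then show ?thesis by (simp add: abs_square_le_1)
  qed
  have reb: "\<bar>Re (z l)\<bar> \<le> 1" "\<bar>Im (z l)\<bar> \<le> 1" for l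
    using zn[of l] abs_Re_le_cmod abs_Im_le_cmod order_trans by blast+
  have ub: "\<bar>u l\<bar> \<le> 2" "\<bar>w l\<bar> \<le> 2" for l
    using reb[of l] by (auto simp: u_def w_def)
  have ub1: "\<bar>u l\<bar> \<le> 1" "\<bar>w l\<bar> \<le> 1" for l
  proof -
    have "(u l)^2 \<le> 1" "(w l)^2 \<le> 1" using uw[of l] by (smt (verit) zero_le_power2)+
    then show "\<bar>u l\<bar> \<le> 1" "\<bar>w l\<bar> \<le> 1" by (simp_all add: abs_square_le_1)
  qed
  have hb: "\<bar>u l * cos t + w l * sin t\<bar> \<le> 2" for l t
  proof -
    have "\<bar>u l * cos t + w l * sin t\<bar> \<le> \<bar>u l\<bar> * \<bar>cos t\<bar> + \<bar>w l\<bar> * \<bar>sin t\<bar>"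
      by (metis abs_mult abs_triangle_ineq)
    also have "\<dots> \<le> 1 * 1 + 1 * 1"
      using ub1[of l] by (intro add_mono mult_mono) auto
    finally show ?thesis by simp
  qed
  have pb: "p l \<theta> e \<le> 1" if "\<theta> \<in> {0..<pi}" "e \<in> {1, -1}" for l \<theta> e
    using p1[OF that(1), of l] p0[of l \<theta> 1] p0[of l \<theta> "-1"] that(2) by auto
  have key: "\<eta> \<le> measure_pmf.expectation \<kappa> (\<lambda>l. \<bar>u l * cos \<theta> + w l * sin \<theta>\<bar>)"
    if th: "\<theta> \<in> {0..<pi}" for \<theta>
  proof -
    have PQ: "Pi \<theta> e = Qm \<theta> e" if e: "e \<in> {1, -1}" for e
      by (rule proj_eq[OF assms(3)[OF th e] Qm_herm Qm_a[OF e] Qm_b[OF e]])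
    have EQ: "measure_pmf.expectation \<kappa> (\<lambda>l. complex_of_real (p l \<theta> e) * z l)
        = - complex_of_real \<eta> / 2 * (complex_of_real e * (complex_of_real (cos \<theta>) - \<i> * complex_of_real (sin \<theta>)) / 2)"
      if e: "e \<in> {1, -1}" for e
    proof -
      have "assemblage \<eta> (Pi \<theta> e) $ False $ True = measure_pmf.expectation \<kappa> (\<lambda>l. complex_of_real (p l \<theta> e) * z l)"
        by (simp add: as[OF th e] z_def)
      moreover have "assemblage \<eta> (Pi \<theta> e) $ False $ True = - complex_of_real \<eta> / 2 * (complex_of_real e * (complex_of_real (cos \<theta>) - \<i> * complex_of_real (sin \<theta>)) / 2)"
        by (simp add: assemblage_FT PQ[OF e] Qm_def obs_entries)
      ultimately show ?thesis by simp
    qed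
    have intc: "integrable (measure_pmf \<kappa>) (\<lambda>l. complex_of_real (p l \<theta> e) * z l)" if e: "e \<in> {1, -1}" for e
    proof (rule pmf_int_bounded[where B=1])
      fix l
      have "norm (complex_of_real (p l \<theta> e) * z l) = \<bar>p l \<theta> e\<bar> * norm (z l)" by (simp add: norm_mult)
      also have "\<dots> \<le> 1 * 1" using pb[OF th e, of l] p0[of l \<theta> e] zn[of l]
        by (intro mult_mono) auto
      finally show "norm (complex_of_real (p l \<theta> e) * z l) \<le> 1" by simp
    qed
    have intR: "integrable (measure_pmf \<kappa>) (\<lambda>l. p l \<theta> e * Re (z l))"
      and intI: "integrable (measure_pmf \<kappa>) (\<lambda>l. p l \<theta> e * Im (z l))" if e: "e \<in> {1, -1}" for e
    proof -
      have "\<bar>p l \<theta> e\<bar> * \<bar>Re (z l)\<bar> \<le> 1 * 1" "\<bar>p l \<theta> e\<bar> * \<bar>Im (z l)\<bar> \<le> 1 * 1" for l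
        using pb[OF th e, of l] p0[of l \<theta> e] reb[of l] by (intro mult_mono; auto)+
      then show "integrable (measure_pmf \<kappa>) (\<lambda>l. p l \<theta> e * Re (z l))"
        "integrable (measure_pmf \<kappa>) (\<lambda>l. p l \<theta> e * Im (z l))"
        by (auto intro!: pmf_int_bounded[where B=1] simp: abs_mult)
    qed
    have ER: "measure_pmf.expectation \<kappa> (\<lambda>l. p l \<theta> e * Re (z l)) = - \<eta> * e * cos \<theta> / 4"
      and EI: "measure_pmf.expectation \<kappa> (\<lambda>l. p l \<theta> e * Im (z l)) = \<eta> * e * sin \<theta> / 4"
      if e: "e \<in> {1, -1}" for e
    proof -
      have "measure_pmf.expectation \<kappa> (\<lambda>l. p l \<theta> e * Re (z l)) = measure_pmf.expectation \<kappa> (\<lambda>l. Re (complex_of_real (p l \<theta> e) * z l))"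
        by simp
      also have "\<dots> = Re (measure_pmf.expectation \<kappa> (\<lambda>l. complex_of_real (p l \<theta> e) * z l))"
        by (rule integral_Re[OF intc[OF e]])
      also have "\<dots> = - \<eta> * e * cos \<theta> / 4" by (simp add: EQ[OF e])
      finally show "measure_pmf.expectation \<kappa> (\<lambda>l. p l \<theta> e * Re (z l)) = - \<eta> * e * cos \<theta> / 4" .
      have "measure_pmf.expectation \<kappa> (\<lambda>l. p l \<theta> e * Im (z l)) = measure_pmf.expectation \<kappa> (\<lambda>l. Im (complex_of_real (p l \<theta> e) * z l))"
        by simp
      also have "\<dots> = Im (measure_pmf.expectation \<kappa> (\<lambda>l. complex_of_real (p l \<theta> e) * z l))"
        by (rule integral_Im[OF intc[OF e]])
      also have "\<dots> = \<eta> * e * sin \<theta> / 4" by (simp add: EQ[OF e])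
      finally show "measure_pmf.expectation \<kappa> (\<lambda>l. p l \<theta> e * Im (z l)) = \<eta> * e * sin \<theta> / 4" .
    qed
    define g where "g l = (p l \<theta> (-1) - p l \<theta> 1) * (u l * cos \<theta> + w l * sin \<theta>)" for l
    have g_eq: "g = (\<lambda>l. 2 * cos \<theta> * (p l \<theta> (-1) * Re (z l) - p l \<theta> 1 * Re (z l))
                      - 2 * sin \<theta> * (p l \<theta> (-1) * Im (z l) - p l \<theta> 1 * Im (z l)))"
      by (auto simp: g_def u_def w_def algebra_simps)
    have m1: "(-1::real) \<in> {1, -1}" and o1: "(1::real) \<in> {1, -1}" by auto
    have "measure_pmf.expectation \<kappa> g =
        2 * cos \<theta> * (measure_pmf.expectation \<kappa> (\<lambda>l. p l \<theta> (-1) * Re (z l)) - measure_pmf.expectation \<kappa> (\<lambda>l. p l \<theta> 1 * Re (z l)))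
      - 2 * sin \<theta> * (measure_pmf.expectation \<kappa> (\<lambda>l. p l \<theta> (-1) * Im (z l)) - measure_pmf.expectation \<kappa> (\<lambda>l. p l \<theta> 1 * Im (z l)))"
      unfolding g_eq
      by (simp add: integral_diff intR[OF m1] intR[OF o1] intI[OF m1] intI[OF o1])
    also have "\<dots> = \<eta> * (cos \<theta> * cos \<theta> + sin \<theta> * sin \<theta>)"
      unfolding ER[OF m1] ER[OF o1] EI[OF m1] EI[OF o1] by (simp add: algebra_simps del: sin_cos_squared_add3)
    also have "\<dots> = \<eta>" by simp
    finally have Eg: "measure_pmf.expectation \<kappa> g = \<eta>" .
    have intg: "integrable (measure_pmf \<kappa>) g"
      unfolding g_eq using intR[OF m1] intR[OF o1] intI[OF m1] intI[OF o1] by simp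
    have inth: "integrable (measure_pmf \<kappa>) (\<lambda>l. \<bar>u l * cos \<theta> + w l * sin \<theta>\<bar>)"
      by (intro integrable_abs integrable_add integrable_mult_left pmf_int_bounded[where B=2])
        (auto simp: ub hb)
    have "measure_pmf.expectation \<kappa> g \<le> measure_pmf.expectation \<kappa> (\<lambda>l. \<bar>u l * cos \<theta> + w l * sin \<theta>\<bar>)"
    proof (rule integral_mono[OF intg inth])
      fix l
      have "\<bar>p l \<theta> (-1) - p l \<theta> 1\<bar> \<le> 1"
        using pb[OF th m1, of l] pb[OF th o1, of l] p0[of l \<theta> 1] p0[of l \<theta> "-1"] by auto
      then have "\<bar>g l\<bar> \<le> 1 * \<bar>u l * cos \<theta> + w l * sin \<theta>\<bar>"
        unfolding g_def abs_mult by (intro mult_right_mono) auto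
      then show "g l \<le> \<bar>u l * cos \<theta> + w l * sin \<theta>\<bar>" by simp
    qed
    then show ?thesis using Eg by simp
  qed
  have bound: "\<eta> \<le> 1 / (real N * sin (pi / real N / 2))" if N: "N > 0" for N :: nat
  proof -
    define h where "h j = (\<lambda>l. \<bar>u l * cos (real j * (pi / N)) + w l * sin (real j * (pi / N))\<bar>)" for j
    have thj: "real j * (pi / N) \<in> {0..<pi}" if "j < N" for j
    proof -
      have "real j * (pi / N) < real N * (pi / N)" using that N by (intro mult_strict_right_mono) auto
      then show ?thesis using N by simp
    qed
    have inth: "integrable (measure_pmf \<kappa>) (h j)" for j
      unfolding h_def
      by (intro integrable_abs integrable_add integrable_mult_left pmf_int_bounded[where B=2])
        (auto simp: ub hb)
    have "real N * \<eta> = (\<Sum>j<N. \<eta>)" by simp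
    also have "\<dots> \<le> (\<Sum>j<N. measure_pmf.expectation \<kappa> (h j))"
    proof (intro sum_mono)
      fix j assume "j \<in> {..<N}"
      then show "\<eta> \<le> measure_pmf.expectation \<kappa> (h j)" unfolding h_def by (intro key thj) simp
    qed
    also have "\<dots> = measure_pmf.expectation \<kappa> (\<lambda>l. \<Sum>j<N. h j l)"
      by (subst Bochner_Integration.integral_sum) (auto intro: inth)
    also have "\<dots> \<le> measure_pmf.expectation \<kappa> (\<lambda>l. 1 / sin (pi / real N / 2))"
    proof (rule integral_mono)
      show "integrable (measure_pmf \<kappa>) (\<lambda>l. \<Sum>j<N. h j l)" by (rule Bochner_Integration.integrable_sum) (rule inth)
      show "integrable (measure_pmf \<kappa>) (\<lambda>l. 1 / sin (pi / real N / 2))" by simp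
      fix l show "(\<Sum>j<N. h j l) \<le> 1 / sin (pi / real N / 2)"
        unfolding h_def by (rule sum_abs_bound[OF uw N])
    qed
    also have "\<dots> = 1 / sin (pi / real N / 2)" by simp
    finally have "real N * \<eta> \<le> 1 / sin (pi / real N / 2)" .
    moreover have "real N * sin (pi / real N / 2) > 0" using N sin_pos_N[OF N] by simp
    ultimately show ?thesis using sin_pos_N[OF N] N by (simp add: field_simps)
  qed
  show ?thesis
  proof (rule LIMSEQ_le_const[OF lim_bound], intro exI allI impI)
    fix n :: nat assume "n \<ge> 1"
    then show "\<eta> \<le> 1 / (real n * sin (pi / real n / 2))" by (intro bound) simp
  qed
qed


end
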